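(* For every integer $n\ge 6$, $q(K_{1,1,n-2}^+)>n+2-\frac{4}{n+2}$.
   Context: $q(G)$ denotes the largest eigenvalue of the signless Laplacian matrix $Q(G)=D(G)+A(G)$ of a graph $G$, where $A(G)$ is the adjacency matrix and $D(G)$ the diagonal degree matrix. $K_{1,1,n-2}$ is the complete tripartite graph with parts of sizes $1,1,n-2$, and $K_{1,1,n-2}^+$ is obtained from it by adding one edge inside the part of size $n-2$. *)

theory Defs
  imports "Jordan_Normal_Form.Char_Poly"
begin

text \<open>A simple graph on vertex set {0..<n} given by a symmetric irreflexive
  edge predicate E.\<close>

definition adjacency_matrix :: "nat \<Rightarrow> (nat \<Rightarrow> nat \<Rightarrow> bool) \<Rightarrow> real mat" where
  "adjacency_matrix n E = mat n n (\<lambda>(i, j). if E i j then 1 else 0)"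

definition degree :: "nat \<Rightarrow> (nat \<Rightarrow> nat \<Rightarrow> bool) \<Rightarrow> nat \<Rightarrow> nat" where
  "degree n E i = card {k. k < n \<and> E i k}"

definition degree_matrix :: "nat \<Rightarrow> (nat \<Rightarrow> nat \<Rightarrow> bool) \<Rightarrow> real mat" where
  "degree_matrix n E = mat n n (\<lambda>(i, j). if i = j then real (degree n E i) else 0)"

definition signless_laplacian :: "nat \<Rightarrow> (nat \<Rightarrow> nat \<Rightarrow> bool) \<Rightarrow> real mat" where
  "signless_laplacian n E = degree_matrix n E + adjacency_matrix n E"

definition q_index :: "nat \<Rightarrow> (nat \<Rightarrow> nat \<Rightarrow> bool) \<Rightarrow> real" where
  "q_index n E = Max {\<mu>. eigenvalue (signless_laplacian n E) \<mu>}"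

text \<open>K_{1,1,n-2}^+ on vertices {0..<n}: parts {0}, {1}, {2..n-1};
  the extra edge inside the large part is {2,3}.\<close>
definition K11_plus :: "nat \<Rightarrow> nat \<Rightarrow> bool" where
  "K11_plus i j = (i \<noteq> j \<and> (i < 2 \<or> j < 2 \<or> {i, j} = {2, 3}))"

end

theory Submission
  imports Defs
begin

lemma deg01: "i < 2 \<Longrightarrow> 6 \<le> n \<Longrightarrow> degree n K11_plus i = n - 1"
proof -
  assume "i < 2" "6 \<le> n"
  then have "{k. k < n \<and> K11_plus i k} = {..<n} - {i}" by (auto simp: K11_plus_def)
  then show ?thesis using \<open>i<2\<close> \<open>6 \<le> n\<close> by (simp add: degree_def)
qed

lemma deg23: "2 \<le> i \<Longrightarrow> i < 4 \<Longrightarrow> 6 \<le> n \<Longrightarrow> degree n K11_plus i = 3"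
proof -
  assume "2 \<le> i" "i < 4" "6 \<le> n"
  then have "{k. k < n \<and> K11_plus i k} = {0,1,5-i}" by (cases "i = 2") (auto simp: K11_plus_def doubleton_eq_iff)
  then show ?thesis using \<open>2 \<le> i\<close> \<open>i < 4\<close> by (simp add: degree_def)
qed

lemma deg4: "4 \<le> i \<Longrightarrow> i < n \<Longrightarrow> degree n K11_plus i = 2"
proof -
  assume "4 \<le> i" "i < n"
  then have "{k. k < n \<and> K11_plus i k} = {0,1}" by (auto simp: K11_plus_def doubleton_eq_iff)
  then show ?thesis by (simp add: degree_def)
qed

lemma Qmult:
  assumes "i < n" "v \<in> carrier_vec n"
  shows "(signless_laplacian n K11_plus *\<^sub>v v) $ i =
     real (degree n K11_plus i) * v $ i + (\<Sum>j<n. if K11_plus i j then v $ j else 0)"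
proof -
  have "(signless_laplacian n K11_plus *\<^sub>v v) $ i =
    (\<Sum>j<n. ((if i = j then real (degree n K11_plus i) else 0) + (if K11_plus i j then 1 else 0)) * v $ j)"
    using assms by (simp add: signless_laplacian_def degree_matrix_def adjacency_matrix_def
        scalar_prod_def atLeast0LessThan)
  also have "\<dots> = (\<Sum>j<n. (if i = j then real (degree n K11_plus i) * v $ j else 0))
      + (\<Sum>j<n. if K11_plus i j then v $ j else 0)"
    by (subst sum.distrib[symmetric]) (rule sum.cong, auto simp: algebra_simps)
  also have "(\<Sum>j<n. (if i = j then real (degree n K11_plus i) * v $ j else 0)) = real (degree n K11_plus i) * v $ i"
    using assms(1) by (simp add: sum.delta)
  finally show ?thesis .
qed

lemma split_sum:
  fixes g :: "nat \<Rightarrow> real"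
  assumes "4 \<le> n"
  shows "(\<Sum>j<n. g j) = g 0 + g 1 + g 2 + g 3 + (\<Sum>j\<in>{4..<n}. g j)"
proof -
  have "(\<Sum>j<n. g j) = (\<Sum>j\<in>{0..<4}. g j) + (\<Sum>j\<in>{4..<n}. g j)"
    using assms by (simp add: atLeast0LessThan[symmetric] sum.atLeastLessThan_concat)
  moreover have "(\<Sum>j\<in>{0..<4}. g j) = g 0 + g 1 + g 2 + g 3"
    by (simp add: numeral_eq_Suc)
  ultimately show ?thesis by simp
qed

theorem lemma2p8:
  fixes n :: nat
  assumes "n \<ge> 6"
  shows "q_index n K11_plus > real n + 2 - 4 / (real n + 2)"
proof -
  define Q where "Q = signless_laplacian n K11_plus"
  have QC: "Q \<in> carrier_mat n n"
    by (simp add: Q_def signless_laplacian_def degree_matrix_def adjacency_matrix_def)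
  define p where "p = (\<lambda>m::real. (m - n) * (m - 4) * (m - 2) - 4 * (m - 2) - 2 * (real n - 4) * (m - 4))"
  define t where "t = real n + 2"
  define m0 where "m0 = real n + 2 - 4 / (real n + 2)"
  have t8: "t \<ge> 8" using assms by (simp add: t_def)
  have m0t: "m0 = t - 4 / t" by (simp add: m0_def t_def)
  have pm0: "p m0 = (-8*t^3 + 16*t^2 - 64*t - 64) / t^3"
  proof -
    have nt: "real n = t - 2" by (simp add: t_def)
    have "t > 0" using t8 by simp
    then show ?thesis unfolding m0t p_def nt
      by (simp add: field_simps power3_eq_cube power2_eq_square)
  qed
  have "-8*t^3 + 16*t^2 - 64*t - 64 < 0"
  proof -
    have "16*t^2 \<le> 8*t^3" using t8 by (simp add: power2_eq_square power3_eq_cube)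
    then show ?thesis using t8 by linarith
  qed
  then have pneg: "p m0 < 0" using t8 unfolding pm0 by (simp add: divide_neg_pos)
  have m0ge: "m0 \<ge> 7"
  proof -
    have "4 / t \<le> 1" using t8 by simp
    then show ?thesis using t8 m0t by linarith
  qed
  define M where "M = real n + 10"
  have pM: "p M > 0"
  proof -
    have "p M = 8 * real n ^ 2 + 132 * real n + 496"
      by (simp add: p_def M_def algebra_simps power2_eq_square)
    then show ?thesis by (smt (verit) of_nat_0_le_iff zero_le_power2)
  qed
  have "m0 \<le> M" using m0_def M_def by (smt (verit) divide_nonneg_pos of_nat_0_le_iff)
  moreover have "continuous_on {m0..M} p" unfolding p_def by (intro continuous_intros)
  ultimately obtain mu where mu: "m0 \<le> mu" "mu \<le> M" "p mu = 0"
    using IVT'[of p m0 0 M] pneg pM by auto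
  have mugt: "mu > m0" using mu pneg by (cases "mu = m0") auto
  have mu4: "mu > 4" using mugt m0ge by simp
  define y where "y = 2 / (mu - 4)"
  define z where "z = 2 / (mu - 2)"
  have y: "(mu - 4) * y = 2" using mu4 by (simp add: y_def field_simps)
  have z: "(mu - 2) * z = 2" using mu4 by (simp add: z_def field_simps)
  have key: "real n + 2 * y + (real n - 4) * z = mu"
  proof -
    have "(mu - 4) * (mu - 2) * (real n + 2 * y + (real n - 4) * z) = (mu - 4) * (mu - 2) * mu"
    proof -
      have "(mu - 4) * (mu - 2) * (real n + 2 * y + (real n - 4) * z) =
        (mu - 4) * (mu - 2) * real n + 2 * (mu - 2) * ((mu - 4) * y) + (real n - 4) * (mu - 4) * ((mu - 2) * z)"
        by (simp add: algebra_simps)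
      also have "\<dots> = (mu - 4) * (mu - 2) * real n + 4 * (mu - 2) + 2 * (real n - 4) * (mu - 4)"
        unfolding y z by simp
      also have "\<dots> = (mu - 4) * (mu - 2) * mu"
        using mu(3) unfolding p_def by (simp add: algebra_simps)
      finally show ?thesis .
    qed
    then show ?thesis using mu4 by simp
  qed
  define v where "v = vec n (\<lambda>j. if j < 2 then 1 else if j < 4 then y else z)"
  have vC: "v \<in> carrier_vec n" by (simp add: v_def)
  have v0: "v \<noteq> 0\<^sub>v n"
  proof
    assume "v = 0\<^sub>v n"
    then have "v $ 0 = 0" using assms by simp
    then show False using assms by (simp add: v_def)
  qed
  have "Q *\<^sub>v v = mu \<cdot>\<^sub>v v"
  proof (rule eq_vecI)
    show "dim_vec (Q *\<^sub>v v) = dim_vec (mu \<cdot>\<^sub>v v)" using QC vC by simp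
    fix i assume "i < dim_vec (mu \<cdot>\<^sub>v v)"
    then have i: "i < n" using vC by simp
    have n4: "4 \<le> n" using assms by simp
    have E: "(Q *\<^sub>v v) $ i = real (degree n K11_plus i) * v $ i + (\<Sum>j<n. if K11_plus i j then v $ j else 0)"
      unfolding Q_def by (rule Qmult[OF i vC])
    have vj: "\<And>j. j < n \<Longrightarrow> v $ j = (if j < 2 then 1 else if j < 4 then y else z)"
      by (simp add: v_def)
    have S: "(\<Sum>j<n. if K11_plus i j then v $ j else 0) =
       (if K11_plus i 0 then 1 else 0) + (if K11_plus i 1 then 1 else 0)
       + (if K11_plus i 2 then y else 0) + (if K11_plus i 3 then y else 0)
       + (\<Sum>j\<in>{4..<n}. if K11_plus i j then z else 0)"
      unfolding split_sum[OF n4] using n4 vj by (auto intro!: sum.cong)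
    have R: "(mu \<cdot>\<^sub>v v) $ i = mu * (if i < 2 then 1 else if i < 4 then y else z)"
      using i vC by (simp add: v_def)
    consider "i = 0" | "i = 1" | "i = 2" | "i = 3" | "4 \<le> i" by linarith
    then show "(Q *\<^sub>v v) $ i = (mu \<cdot>\<^sub>v v) $ i"
    proof cases
      case 1
      have "(\<Sum>j\<in>{4..<n}. if K11_plus i j then z else 0) = (real n - 4) * z"
        using 1 n4 by (simp add: K11_plus_def of_nat_diff)
      then show ?thesis using R 1 i E S deg01[of i n] assms key by (simp add: K11_plus_def vj of_nat_diff algebra_simps)
    next
      case 2
      have "(\<Sum>j\<in>{4..<n}. if K11_plus i j then z else 0) = (real n - 4) * z"
        using 2 n4 by (simp add: K11_plus_def of_nat_diff)
      then show ?thesis using R 2 i E S deg01[of i n] assms key by (simp add: K11_plus_def vj of_nat_diff algebra_simps)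
    next
      case 3
      have "(\<Sum>j\<in>{4..<n}. if K11_plus i j then z else 0) = 0"
        using 3 by (intro sum.neutral) (auto simp: K11_plus_def doubleton_eq_iff)
      then show ?thesis using R 3 i E S deg23[of i n] assms y by (simp add: K11_plus_def vj doubleton_eq_iff algebra_simps)
    next
      case 4
      have "(\<Sum>j\<in>{4..<n}. if K11_plus i j then z else 0) = 0"
        using 4 by (intro sum.neutral) (auto simp: K11_plus_def doubleton_eq_iff)
      then show ?thesis using R 4 i E S deg23[of i n] assms y by (simp add: K11_plus_def vj doubleton_eq_iff algebra_simps)
    next
      case 5
      have "(\<Sum>j\<in>{4..<n}. if K11_plus i j then z else 0) = 0"
        using 5 by (intro sum.neutral) (auto simp: K11_plus_def doubleton_eq_iff)
      then show ?thesis using R 5 i E S deg4[of i n] z by (simp add: K11_plus_def vj doubleton_eq_iff algebra_simps)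
    qed
  qed
  then have ev: "eigenvalue Q mu"
    unfolding eigenvalue_def eigenvector_def using vC v0 QC by auto
  have fin: "finite {\<mu>. eigenvalue Q \<mu>}"
  proof -
    have "char_poly Q \<noteq> 0"
    proof
      assume "char_poly Q = 0"
      then show False using degree_monic_char_poly[OF QC] by simp
    qed
    then have "finite {\<mu>. poly (char_poly Q) \<mu> = 0}" by (rule poly_roots_finite)
    then show ?thesis using eigenvalue_root_char_poly[OF QC] by simp
  qed
  have "mu \<le> q_index n K11_plus"
    unfolding q_index_def Q_def[symmetric] using fin ev by (metis Max_ge mem_Collect_eq)
  then show ?thesis using mugt m0_def by simp
qed

end
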